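(* Let $a_1,a_2$ be nonzero integers and $(U_n)_{n\ge0}$ the Lucas sequence with $U_0=0$, $U_1=1$, $U_n=a_1U_{n-1}+a_2U_{n-2}$; let $\alpha,\beta$ be the roots of $X^2-a_1X-a_2$, assume $\alpha/\beta$ is not a root of unity and $\Delta:=a_1^2+4a_2$ is not a square. For every positive integer $d$ and every $x>1$, \[ \mathcal{R}_U(d;x)=\sum_{v\mid d^\infty}\sum_{a\mid d}\mu(a)\,\pi_{U,dv,av}(x), \] where the primes dividing $a_2\Delta$ are ignored in all counts.
   Context: $\rho_U(p)$ is the smallest positive integer $k$ with $p\mid U_k$; for $p\nmid a_2\Delta$, $\iota_U(p):=\big(p-\big(\tfrac{\Delta}{p}\big)\big)/\rho_U(p)$, with $\big(\tfrac{\Delta}{p}\big)$ the Legendre symbol. $\mathcal{R}_U(d;x):=\#\{p\le x:\ p\nmid a_2,\ d\mid\rho_U(p)\}$. For positive integers $m\mid n$, $\pi_{U,n,m}(x):=\#\{p\le x:\ p\nmid a_2\Delta,\ p\equiv\big(\tfrac{\Delta}{p}\big)\pmod n,\ m\mid\iota_U(p)\}$. The sum over $v\mid d^\infty$ runs over all positive integers $v$ all of whose prime factors divide $d$. $\mu$ is the Möbius function. *)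

theory Defs
  imports "HOL-Analysis.Analysis" "HOL-Number_Theory.Number_Theory"
    "HOL-Computational_Algebra.Squarefree"
begin

fun lucasU :: "int \<Rightarrow> int \<Rightarrow> nat \<Rightarrow> int" where
  "lucasU a1 a2 0 = 0"
| "lucasU a1 a2 (Suc 0) = 1"
| "lucasU a1 a2 (Suc (Suc n)) = a1 * lucasU a1 a2 (Suc n) + a2 * lucasU a1 a2 n"

definition disc :: "int \<Rightarrow> int \<Rightarrow> int" where
  "disc a1 a2 = a1^2 + 4 * a2"

definition lalpha :: "int \<Rightarrow> int \<Rightarrow> complex" where
  "lalpha a1 a2 = (of_int a1 + csqrt (of_int (disc a1 a2))) / 2"
definition lbeta :: "int \<Rightarrow> int \<Rightarrow> complex" where
  "lbeta a1 a2 = (of_int a1 - csqrt (of_int (disc a1 a2))) / 2"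

definition rhoU :: "int \<Rightarrow> int \<Rightarrow> nat \<Rightarrow> nat" where
  "rhoU a1 a2 p = (LEAST k. 0 < k \<and> int p dvd lucasU a1 a2 k)"

text \<open>Symbol (Delta/p): Legendre symbol for odd p; for p = 2 the Kronecker
  symbol convention.\<close>
definition symb :: "int \<Rightarrow> nat \<Rightarrow> int" where
  "symb D p = (if p = 2 then (if even D then 0 else if D mod 8 \<in> {1, 7} then 1 else -1)
               else Legendre D (int p))"

definition iotaU :: "int \<Rightarrow> int \<Rightarrow> nat \<Rightarrow> int" where
  "iotaU a1 a2 p = (int p - symb (disc a1 a2) p) div int (rhoU a1 a2 p)"

definition RU :: "int \<Rightarrow> int \<Rightarrow> nat \<Rightarrow> real \<Rightarrow> nat" where
  "RU a1 a2 d x = card {p. prime p \<and> real p \<le> x \<and> \<not> int p dvd a2 * disc a1 a2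
                          \<and> d dvd rhoU a1 a2 p}"

definition piU :: "int \<Rightarrow> int \<Rightarrow> nat \<Rightarrow> nat \<Rightarrow> real \<Rightarrow> nat" where
  "piU a1 a2 n m x = card {p. prime p \<and> real p \<le> x \<and> \<not> int p dvd a2 * disc a1 a2
       \<and> [int p = symb (disc a1 a2) p] (mod int n) \<and> int m dvd iotaU a1 a2 p}"

definition mu :: "nat \<Rightarrow> int" where
  "mu n = (if n = 0 \<or> \<not> squarefree n then 0 else (-1) ^ card (prime_factors n))"

end

theory Submission
  imports Defs
begin

lemma lucas_add:
  "lucasU a1 a2 (m + n + 1) = lucasU a1 a2 (m+1) * lucasU a1 a2 (n+1) + a2 * lucasU a1 a2 m * lucasU a1 a2 n"
proof (induction m rule: less_induct)
  case (less m)
  show ?case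
  proof (cases m)
    case 0 then show ?thesis by simp
  next
    case (Suc k) note k = this
    show ?thesis
    proof (cases k)
      case 0 then show ?thesis using k by (simp add: algebra_simps)
    next
      case (Suc j)
      have h1: "lucasU a1 a2 (Suc j + n + 1) = lucasU a1 a2 (Suc j+1) * lucasU a1 a2 (n+1) + a2 * lucasU a1 a2 (Suc j) * lucasU a1 a2 n"
        using less[of "Suc j"] k Suc by simp
      have h2: "lucasU a1 a2 (j + n + 1) = lucasU a1 a2 (j+1) * lucasU a1 a2 (n+1) + a2 * lucasU a1 a2 j * lucasU a1 a2 n"
        using less[of j] k Suc by simp
      have e: "m + n + 1 = Suc (Suc (j + n + 1))" using k Suc by simp
      have "lucasU a1 a2 (m + n + 1) = a1 * lucasU a1 a2 (Suc j + n + 1) + a2 * lucasU a1 a2 (j + n + 1)"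
        unfolding e by simp
      also have "\<dots> = lucasU a1 a2 (m+1) * lucasU a1 a2 (n+1) + a2 * lucasU a1 a2 m * lucasU a1 a2 n"
        unfolding h1 h2 using k Suc by (simp add: algebra_simps)
      finally show ?thesis .
    qed
  qed
qed

lemma lucas_consec:
  assumes "prime p" "\<not> int p dvd a2"
  shows "\<not> (int p dvd lucasU a1 a2 (Suc k) \<and> int p dvd lucasU a1 a2 k)"
proof (induction k)
  case 0
  have "p \<noteq> 1" using assms(1) by auto
  then have "\<not> int p dvd 1" by simp
  then show ?case by simp
next
  case (Suc k)
  have pp: "prime (int p)" using assms by simp
  show ?case
  proof
    assume h: "int p dvd lucasU a1 a2 (Suc (Suc k)) \<and> int p dvd lucasU a1 a2 (Suc k)"
    then have "int p dvd a2 * lucasU a1 a2 k"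
      by (metis dvd_add_right_iff dvd_mult lucasU.simps(3))
    then have "int p dvd lucasU a1 a2 k" using pp assms(2) prime_dvd_mult_iff by blast
    then show False using Suc h by blast
  qed
qed

lemma lucas_shift:
  assumes "prime p" "\<not> int p dvd a2" "int p dvd lucasU a1 a2 n" "0 < n"
  shows "int p dvd lucasU a1 a2 (m + n) \<longleftrightarrow> int p dvd lucasU a1 a2 m"
proof -
  obtain n' where n: "n = Suc n'" using assms(4) by (cases n) auto
  have pp: "prime (int p)" using assms by simp
  have nd: "\<not> int p dvd lucasU a1 a2 n'" using lucas_consec[OF assms(1,2), of a1 n'] assms(3) n by auto
  have "lucasU a1 a2 (m + n) = lucasU a1 a2 (m+1) * lucasU a1 a2 n + a2 * lucasU a1 a2 m * lucasU a1 a2 n'"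
    using lucas_add[of a1 a2 m n'] n by simp
  then have "int p dvd lucasU a1 a2 (m + n) \<longleftrightarrow> int p dvd a2 * lucasU a1 a2 m * lucasU a1 a2 n'"
    using assms(3) dvd_mult[OF assms(3), of "lucasU a1 a2 (m+1)"] by (simp add: dvd_add_right_iff)
  also have "\<dots> \<longleftrightarrow> int p dvd lucasU a1 a2 m"
    using pp assms(2) nd prime_dvd_mult_iff by metis
  finally show ?thesis .
qed

lemma rho_props:
  assumes "prime p" "\<not> int p dvd a2" "0 < N" "int p dvd lucasU a1 a2 N"
  shows "0 < rhoU a1 a2 p" "\<And>k. int p dvd lucasU a1 a2 k \<longleftrightarrow> rhoU a1 a2 p dvd k"
proof -
  let ?r = "rhoU a1 a2 p"
  have ex: "0 < ?r \<and> int p dvd lucasU a1 a2 ?r"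
    unfolding rhoU_def by (rule LeastI[of _ N]) (use assms in auto)
  have mn: "\<And>k. 0 < k \<Longrightarrow> int p dvd lucasU a1 a2 k \<Longrightarrow> ?r \<le> k"
    unfolding rhoU_def by (rule Least_le) auto
  show "0 < ?r" using ex by simp
  show "int p dvd lucasU a1 a2 k \<longleftrightarrow> ?r dvd k" for k
  proof (induction k rule: less_induct)
    case (less k)
    show ?case
    proof (cases "k < ?r")
      case True
      then show ?thesis using mn[of k]
        by (metis dvd_0_right dvd_imp_le lucasU.simps(1) neq0_conv not_le)
    next
      case False
      then obtain j where j: "k = j + ?r" by (metis add.commute le_add_diff_inverse not_le)
      have "j < k" using j ex by simp
      then show ?thesis using less[of j] lucas_shift[OF assms(1,2), of a1 ?r j] ex j
        by (simp add: dvd_add_left_iff)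
    qed
  qed
qed

fun lucasV :: "int \<Rightarrow> int \<Rightarrow> nat \<Rightarrow> int" where
  "lucasV a1 a2 0 = 2"
| "lucasV a1 a2 (Suc 0) = a1"
| "lucasV a1 a2 (Suc (Suc n)) = a1 * lucasV a1 a2 (Suc n) + a2 * lucasV a1 a2 n"

lemma two_step_induct:
  assumes "P 0" "P 1" "\<And>n. P n \<Longrightarrow> P (Suc n) \<Longrightarrow> P (Suc (Suc n))"
  shows "P n"
proof -
  have "P n \<and> P (Suc n)" by (induction n) (use assms in auto)
  then show ?thesis by simp
qed

lemma UV_rel: "2 * lucasU a1 a2 (Suc n) = a1 * lucasU a1 a2 n + lucasV a1 a2 n"
proof (induction n rule: two_step_induct)
  case 1 then show ?case by simp
next
  case 2 then show ?case by simp
next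
  case (3 n)
  have "2 * lucasU a1 a2 (Suc (Suc (Suc n))) = a1 * (2 * lucasU a1 a2 (Suc (Suc n))) + a2 * (2 * lucasU a1 a2 (Suc n))"
    by (simp add: algebra_simps)
  also have "\<dots> = a1 * (a1 * lucasU a1 a2 (Suc n) + lucasV a1 a2 (Suc n)) + a2 * (a1 * lucasU a1 a2 n + lucasV a1 a2 n)"
    using 3 by simp
  also have "\<dots> = a1 * lucasU a1 a2 (Suc (Suc n)) + lucasV a1 a2 (Suc (Suc n))"
    by (simp add: algebra_simps)
  finally show ?case .
qed

context
  fixes a1 a2 :: int and s :: complex
  assumes s2: "s^2 = of_int (disc a1 a2)"
begin

lemma sqA: "(of_int a1 + s)^2 = 2 * of_int a1 * (of_int a1 + s) + 4 * of_int a2"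
  using s2 by (simp add: disc_def power2_eq_square algebra_simps)
lemma sqB: "(of_int a1 - s)^2 = 2 * of_int a1 * (of_int a1 - s) + 4 * of_int a2"
  using s2 by (simp add: disc_def power2_eq_square algebra_simps)

lemma binetU: "(of_int a1 + s)^n - (of_int a1 - s)^n = 2^n * s * of_int (lucasU a1 a2 n)"
proof (induction n rule: two_step_induct)
  case 1 then show ?case by simp
next
  case 2 then show ?case by simp
next
  case (3 n)
  have a: "(of_int a1 + s)^(Suc (Suc n)) = (2 * of_int a1 * (of_int a1 + s) + 4 * of_int a2) * (of_int a1 + s)^n"
    using sqA by (metis power2_eq_square power_add add_2_eq_Suc' mult.commute power_Suc)
  have b: "(of_int a1 - s)^(Suc (Suc n)) = (2 * of_int a1 * (of_int a1 - s) + 4 * of_int a2) * (of_int a1 - s)^n"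
    using sqB by (metis power2_eq_square power_add add_2_eq_Suc' mult.commute power_Suc)
  have "(of_int a1 + s)^(Suc (Suc n)) - (of_int a1 - s)^(Suc (Suc n))
     = 2 * of_int a1 * ((of_int a1 + s)^(Suc n) - (of_int a1 - s)^(Suc n)) + 4 * of_int a2 * ((of_int a1 + s)^n - (of_int a1 - s)^n)"
    unfolding a b by (simp add: algebra_simps)
  also have "\<dots> = 2^(Suc (Suc n)) * s * of_int (lucasU a1 a2 (Suc (Suc n)))"
    unfolding 3 by (simp add: algebra_simps)
  finally show ?case .
qed

lemma binetV: "(of_int a1 + s)^n + (of_int a1 - s)^n = 2^n * of_int (lucasV a1 a2 n)"
proof (induction n rule: two_step_induct)
  case 1 then show ?case by simp
next
  case 2 then show ?case by simp
next
  case (3 n)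
  have a: "(of_int a1 + s)^(Suc (Suc n)) = (2 * of_int a1 * (of_int a1 + s) + 4 * of_int a2) * (of_int a1 + s)^n"
    using sqA by (metis power2_eq_square power_add add_2_eq_Suc' mult.commute power_Suc)
  have b: "(of_int a1 - s)^(Suc (Suc n)) = (2 * of_int a1 * (of_int a1 - s) + 4 * of_int a2) * (of_int a1 - s)^n"
    using sqB by (metis power2_eq_square power_add add_2_eq_Suc' mult.commute power_Suc)
  have "(of_int a1 + s)^(Suc (Suc n)) + (of_int a1 - s)^(Suc (Suc n))
     = 2 * of_int a1 * ((of_int a1 + s)^(Suc n) + (of_int a1 - s)^(Suc n)) + 4 * of_int a2 * ((of_int a1 + s)^n + (of_int a1 - s)^n)"
    unfolding a b by (simp add: algebra_simps)
  also have "\<dots> = 2^(Suc (Suc n)) * of_int (lucasV a1 a2 (Suc (Suc n)))"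
    unfolding 3 by (simp add: algebra_simps)
  finally show ?case .
qed

lemma spow: "s^k = (if even k then 1 else s) * of_int (disc a1 a2 ^ (k div 2))"
proof -
  have "s^k = s^(2 * (k div 2) + k mod 2)" by simp
  also have "\<dots> = (s^2)^(k div 2) * s^(k mod 2)" by (simp only: power_add power_mult)
  finally show ?thesis using s2 by (cases "even k") (auto simp: odd_iff_mod_2_eq_one)
qed

lemma binomU: "(of_int a1 + s)^n - (of_int a1 - s)^n = s * of_int (\<Sum>k\<le>n. int (n choose k) * a1^(n-k) * (if odd k then 2 * disc a1 a2 ^ (k div 2) else 0))"
proof -
  have "(of_int a1 + s)^n - (of_int a1 - s)^n = (s + of_int a1)^n - ((-s) + of_int a1)^n" by (simp add: algebra_simps)
  also have "\<dots> = (\<Sum>k\<le>n. of_nat (n choose k) * s^k * of_int a1^(n-k)) - (\<Sum>k\<le>n. of_nat (n choose k) * (-s)^k * of_int a1^(n-k))"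
    by (simp only: binomial_ring)
  also have "\<dots> = (\<Sum>k\<le>n. of_nat (n choose k) * (s^k - (-s)^k) * of_int a1^(n-k))"
    unfolding sum_subtractf[symmetric] by (rule sum.cong) (auto simp: algebra_simps)
  also have "\<dots> = (\<Sum>k\<le>n. s * of_int (int (n choose k) * a1^(n-k) * (if odd k then 2 * disc a1 a2 ^ (k div 2) else 0)))"
  proof (rule sum.cong[OF refl])
    fix k
    have "s^k - (-s)^k = (if odd k then 2 * s * of_int (disc a1 a2 ^ (k div 2)) else 0)"
      by (cases "even k") (simp_all add: spow)
    then show "of_nat (n choose k) * (s^k - (-s)^k) * of_int a1^(n-k) = s * of_int (int (n choose k) * a1^(n-k) * (if odd k then 2 * disc a1 a2 ^ (k div 2) else 0))"
      by simp
  qed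
  also have "\<dots> = s * of_int (\<Sum>k\<le>n. int (n choose k) * a1^(n-k) * (if odd k then 2 * disc a1 a2 ^ (k div 2) else 0))"
    by (simp add: sum_distrib_left)
  finally show ?thesis .
qed

lemma binomV: "(of_int a1 + s)^n + (of_int a1 - s)^n = of_int (\<Sum>k\<le>n. int (n choose k) * a1^(n-k) * (if even k then 2 * disc a1 a2 ^ (k div 2) else 0))"
proof -
  have "(of_int a1 + s)^n + (of_int a1 - s)^n = (s + of_int a1)^n + ((-s) + of_int a1)^n" by (simp add: algebra_simps)
  also have "\<dots> = (\<Sum>k\<le>n. of_nat (n choose k) * s^k * of_int a1^(n-k)) + (\<Sum>k\<le>n. of_nat (n choose k) * (-s)^k * of_int a1^(n-k))"
    by (simp only: binomial_ring)
  also have "\<dots> = (\<Sum>k\<le>n. of_nat (n choose k) * (s^k + (-s)^k) * of_int a1^(n-k))"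
    unfolding sum.distrib[symmetric] by (rule sum.cong) (auto simp: algebra_simps)
  also have "\<dots> = (\<Sum>k\<le>n. of_int (int (n choose k) * a1^(n-k) * (if even k then 2 * disc a1 a2 ^ (k div 2) else 0)))"
  proof (rule sum.cong[OF refl])
    fix k
    have "s^k + (-s)^k = (if even k then 2 * of_int (disc a1 a2 ^ (k div 2)) else 0)"
      by (cases "even k") (simp_all add: spow)
    then show "of_nat (n choose k) * (s^k + (-s)^k) * of_int a1^(n-k) = of_int (int (n choose k) * a1^(n-k) * (if even k then 2 * disc a1 a2 ^ (k div 2) else 0))"
      by simp
  qed
  also have "\<dots> = of_int (\<Sum>k\<le>n. int (n choose k) * a1^(n-k) * (if even k then 2 * disc a1 a2 ^ (k div 2) else 0))"
    by simp
  finally show ?thesis .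
qed

end

lemma U_sum:
  assumes "disc a1 a2 \<noteq> 0"
  shows "2^n * lucasU a1 a2 n = (\<Sum>k\<le>n. int (n choose k) * a1^(n-k) * (if odd k then 2 * disc a1 a2 ^ (k div 2) else 0))"
    (is "_ = ?S")
proof -
  define s where "s = csqrt (of_int (disc a1 a2))"
  have s2: "s^2 = of_int (disc a1 a2)" unfolding s_def by simp
  have "s \<noteq> 0" using assms s2 by auto
  have e: "2^n * s * of_int (lucasU a1 a2 n) = s * of_int ?S"
    using binetU[OF s2, of n] binomU[OF s2, of n] by metis
  have "s * of_int (2^n * lucasU a1 a2 n) = s * of_int ?S"
    unfolding e[symmetric] by (simp add: algebra_simps)
  then have "(of_int (2^n * lucasU a1 a2 n) :: complex) = of_int ?S"
    using \<open>s \<noteq> 0\<close> mult_left_cancel by blast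
  then show ?thesis by (simp only: of_int_eq_iff)
qed

lemma V_sum:
  shows "2^n * lucasV a1 a2 n = (\<Sum>k\<le>n. int (n choose k) * a1^(n-k) * (if even k then 2 * disc a1 a2 ^ (k div 2) else 0))"
    (is "_ = ?S")
proof -
  define s where "s = csqrt (of_int (disc a1 a2))"
  have s2: "s^2 = of_int (disc a1 a2)" unfolding s_def by simp
  have "(of_int (2^n * lucasV a1 a2 n) :: complex) = of_int ?S"
    using binetV[OF s2, of n] binomV[OF s2, of n] by simp
  then show ?thesis by (simp only: of_int_eq_iff)
qed

lemma sum_choose_prime:
  assumes "prime p"
  shows "[(\<Sum>k\<le>p. int (p choose k) * f k) = f 0 + f p] (mod int p)"
proof -
  have p1: "1 < p" using assms prime_gt_1_nat by blast
  have split: "{..p} = insert 0 (insert p {1..<p})" using p1 by auto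
  have z: "[(\<Sum>k\<in>{1..<p}. int (p choose k) * f k) = 0] (mod int p)"
  proof (rule cong_sum[where g="\<lambda>_. 0", simplified])
    fix k assume "k \<in> {1..<p}"
    then have "p dvd (p choose k)" using dvd_choose_prime[of k p] assms by auto
    then show "[int (p choose k) * f k = 0] (mod int p)"
      by (simp add: cong_0_iff)
  qed
  have "(\<Sum>k\<le>p. int (p choose k) * f k) = f 0 + f p + (\<Sum>k\<in>{1..<p}. int (p choose k) * f k)"
    unfolding split using p1 by simp
  then show ?thesis using z by (metis add.right_neutral cong_add_lcancel_0)
qed

lemma fermat_int:
  assumes "prime p"
  shows "[a ^ p = a] (mod int p)"
proof -
  define n where "n = nat (a mod int p)"
  have p0: "0 < p" using assms prime_gt_0_nat by blast
  have an: "[a = int n] (mod int p)" unfolding n_def using p0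
    by (simp add: cong_def)
  have "[n ^ p = n] (mod p)"
  proof (cases "p dvd n")
    case True
    then show ?thesis using p0 by (metis cong_0_iff cong_sym cong_trans dvd_power dvd_trans dvd_refl) 
  next
    case False
    have "[n ^ (p - 1) = 1] (mod p)" using fermat_theorem[OF assms False] .
    then have "[n ^ (p - 1) * n = 1 * n] (mod p)" by (rule cong_mult) simp
    moreover have "n ^ (p - 1) * n = n ^ p" using p0 by (metis Suc_diff_1 power_Suc2)
    ultimately show ?thesis by simp
  qed
  then have "[int n ^ p = int n] (mod int p)" by (metis cong_int_iff of_nat_power)
  then show ?thesis using an by (meson cong_pow cong_sym cong_trans)
qed

lemma sum_reassoc: "(\<Sum>k\<le>n. int (n choose k) * a^(n-k) * g k) = (\<Sum>k\<le>n. int (n choose k) * (a^(n-k) * g k))"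
  by (simp add: mult.assoc)

lemma odd_prime_main:
  assumes p: "prime p" "2 < p" and nd: "\<not> int p dvd a2 * disc a1 a2"
  defines "e \<equiv> Legendre (disc a1 a2) (int p)"
  shows "(e = 1 \<and> int p dvd lucasU a1 a2 (p - 1)) \<or> (e = -1 \<and> int p dvd lucasU a1 a2 (p + 1))"
proof -
  let ?D = "disc a1 a2"
  have pp: "prime (int p)" using p by simp
  have na2: "\<not> int p dvd a2" and nD: "\<not> int p dvd ?D" using nd dvd_mult dvd_mult2 by blast+
  have D0: "?D \<noteq> 0" using nD by auto
  have c2: "coprime 2 (int p)"
  proof -
    have "\<not> int p dvd 2"
    proof
      assume "int p dvd 2" then have "p dvd 2" by (metis of_nat_numeral int_dvd_int_iff)
      then show False using p by (auto dest: dvd_imp_le)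
    qed
    then show ?thesis using prime_imp_coprime[OF pp] coprime_commute by blast
  qed
  have oddp: "odd p" using p by (metis prime_odd_nat)
  have pd: "p div 2 = (p - 1) div 2" using oddp by (metis odd_two_times_div_two_nat div_mult_self1_is_m diff_Suc_1 zero_less_numeral mult.commute)
  have eul: "[e = ?D ^ ((p - 1) div 2)] (mod int p)"
    unfolding e_def using euler_criterion[of p ?D] p by simp
  have ee: "e = 1 \<or> e = -1" unfolding e_def Legendre_def using nD by (auto simp: cong_0_iff)
  have f2: "[2 ^ p = (2::int)] (mod int p)" using fermat_int[OF p(1)] .
  have fa: "[a1 ^ p = a1] (mod int p)" using fermat_int[OF p(1)] .
  have "[2 ^ p * lucasU a1 a2 p = a1^(p-0) * (if odd (0::nat) then 2 * ?D ^ (0 div 2) else 0) + a1^(p-p) * (if odd p then 2 * ?D ^ (p div 2) else 0)] (mod int p)"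
    unfolding U_sum[OF D0] sum_reassoc by (rule sum_choose_prime[OF p(1)])
  then have "[2 ^ p * lucasU a1 a2 p = 2 * ?D ^ ((p - 1) div 2)] (mod int p)" using oddp pd by simp
  moreover have "[2 ^ p * lucasU a1 a2 p = 2 * lucasU a1 a2 p] (mod int p)" using f2 by (simp add: cong_mult)
  ultimately have "[2 * lucasU a1 a2 p = 2 * e] (mod int p)"
    using eul by (meson cong_mult cong_refl cong_sym cong_trans)
  then have Up: "[lucasU a1 a2 p = e] (mod int p)" using cong_mult_lcancel[OF c2] by blast
  have "[2 ^ p * lucasV a1 a2 p = a1^(p-0) * (if even (0::nat) then 2 * ?D ^ (0 div 2) else 0) + a1^(p-p) * (if even p then 2 * ?D ^ (p div 2) else 0)] (mod int p)"
    unfolding V_sum sum_reassoc by (rule sum_choose_prime[OF p(1)])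
  then have "[2 ^ p * lucasV a1 a2 p = 2 * a1 ^ p] (mod int p)" using oddp by (simp add: mult.commute)
  moreover have "[2 ^ p * lucasV a1 a2 p = 2 * lucasV a1 a2 p] (mod int p)" using f2 by (simp add: cong_mult)
  ultimately have "[2 * lucasV a1 a2 p = 2 * a1] (mod int p)"
    using fa by (meson cong_mult cong_refl cong_sym cong_trans)
  then have Vp: "[lucasV a1 a2 p = a1] (mod int p)" using cong_mult_lcancel[OF c2] by blast
  have U1: "[2 * lucasU a1 a2 (p + 1) = a1 * e + a1] (mod int p)"
    using UV_rel[of a1 a2 p] Up Vp by (metis Suc_eq_plus1 cong_add cong_mult cong_refl)
  from ee show ?thesis
  proof
    assume e1: "e = 1"
    then have "[2 * lucasU a1 a2 (p + 1) = 2 * a1] (mod int p)" using U1 by simp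
    then have a: "[lucasU a1 a2 (p + 1) = a1] (mod int p)" using cong_mult_lcancel[OF c2] by blast
    obtain q where q: "p = Suc (Suc q)" using p by (metis add_2_eq_Suc' le_add_diff_inverse2 less_imp_le_nat add.commute less_imp_Suc_add Suc_lessD)
    have "lucasU a1 a2 (p + 1) = a1 * lucasU a1 a2 p + a2 * lucasU a1 a2 (p - 1)"
      using q by simp
    moreover have "[a1 * lucasU a1 a2 p + a2 * lucasU a1 a2 (p - 1) = a1 + a2 * lucasU a1 a2 (p - 1)] (mod int p)"
      using Up e1 by (metis cong_add cong_mult cong_refl mult.right_neutral)
    ultimately have "[a1 + a2 * lucasU a1 a2 (p - 1) = a1 + 0] (mod int p)" using a
      by (metis add.right_neutral cong_sym cong_trans)
    then have "int p dvd a2 * lucasU a1 a2 (p - 1)" using cong_add_lcancel cong_0_iff by blast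
    then have "int p dvd lucasU a1 a2 (p - 1)" using pp na2 prime_dvd_mult_iff by blast
    then show ?thesis using e1 by simp
  next
    assume e1: "e = -1"
    then have "[2 * lucasU a1 a2 (p + 1) = 2 * 0] (mod int p)" using U1 by simp
    then have "[lucasU a1 a2 (p + 1) = 0] (mod int p)" using cong_mult_lcancel[OF c2] by blast
    then show ?thesis using e1 by (simp add: cong_0_iff)
  qed
qed

lemma two_case:
  assumes "\<not> int 2 dvd a2 * disc a1 a2"
  shows "symb (disc a1 a2) 2 = -1" "int 2 dvd lucasU a1 a2 3"
proof -
  have oa2: "odd a2" and oD: "odd (disc a1 a2)" using assms by auto
  have oa1: "odd a1" using oD unfolding disc_def by auto
  obtain t where t: "a1 = 2 * t + 1" using oa1 oddE by blast
  obtain u where u: "a2 = 2 * u + 1" using oa2 oddE by blast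
  have "even (t * (t + 1))" by simp
  then obtain w where w: "t * (t + 1) = 2 * w" using evenE by blast
  have "disc a1 a2 = 8 * (w + u) + 5" unfolding disc_def t u
    using w by (simp add: power2_eq_square algebra_simps)
  then have "disc a1 a2 mod 8 = 5" by presburger
  then show "symb (disc a1 a2) 2 = -1" unfolding symb_def using oD by simp
  have "lucasU a1 a2 3 = a1 * a1 + a2" by (simp add: numeral_3_eq_3)
  moreover have "even (a1 * a1 + a2)" using oa1 oa2 by simp
  ultimately show "int 2 dvd lucasU a1 a2 3" by simp
qed

lemma prime_facts:
  assumes p: "prime p" and nd: "\<not> int p dvd a2 * disc a1 a2"
  shows "0 < int p - symb (disc a1 a2) p" "int p - symb (disc a1 a2) p \<le> int p + 1"
        "0 < rhoU a1 a2 p" "rhoU a1 a2 p dvd nat (int p - symb (disc a1 a2) p)"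
proof -
  have na2: "\<not> int p dvd a2" using nd dvd_mult2 by blast
  obtain N where N: "0 < N" "int N = int p - symb (disc a1 a2) p" "int p dvd lucasU a1 a2 N"
  proof (cases "p = 2")
    case True
    then show ?thesis using that[of 3] two_case[of a2 a1] nd by simp
  next
    case False
    then have p2: "2 < p" using prime_ge_2_nat[OF p] False by simp
    have sy: "symb (disc a1 a2) p = Legendre (disc a1 a2) (int p)" unfolding symb_def using False by simp
    from odd_prime_main[OF p p2 nd] show ?thesis
    proof
      assume h: "Legendre (disc a1 a2) (int p) = 1 \<and> int p dvd lucasU a1 a2 (p - 1)"
      show ?thesis using that[of "p - 1"] h sy p2 by (simp add: of_nat_diff)
    next
      assume h: "Legendre (disc a1 a2) (int p) = -1 \<and> int p dvd lucasU a1 a2 (p + 1)"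
      show ?thesis using that[of "p + 1"] h sy p2 by simp
    qed
  qed
  have syb: "symb (disc a1 a2) p \<in> {-1, 0, 1}" unfolding symb_def Legendre_def by auto
  show "0 < int p - symb (disc a1 a2) p" using N by simp
  show "int p - symb (disc a1 a2) p \<le> int p + 1" using syb by auto
  show "0 < rhoU a1 a2 p" using rho_props(1)[OF p na2 N(1) N(3)] .
  have "nat (int p - symb (disc a1 a2) p) = N" using N(2) by simp
  then show "rhoU a1 a2 p dvd nat (int p - symb (disc a1 a2) p)"
    using rho_props(2)[OF p na2 N(1) N(3)] N(3) by simp
qed

lemma alt_sum_Pow:
  assumes "finite S" "S \<noteq> {}"
  shows "(\<Sum>T\<in>Pow S. (-1::int) ^ card T) = 0"
proof -
  have "{} \<subset> S" using assms by auto
  from card_subsupersets_even_odd[OF assms(1) this]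
  have "card {x. x \<in> Pow S \<and> even (card x)} = card {x. x \<in> Pow S \<and> odd (card x)}" by simp
  then show ?thesis using sum_alternating_cancels[of "Pow S" card] assms(1) by simp
qed

lemma prod_primes_factors:
  assumes "finite T" "\<And>p. p \<in> T \<Longrightarrow> prime (p::nat)"
  shows "prime_factors (\<Prod>T) = T" "squarefree (\<Prod>T)"
proof -
  have "0 \<notin> id ` T" using assms(2) by force
  then have "prime_factors (prod id T) = \<Union>((prime_factors \<circ> id) ` T)"
    using prime_factors_prod[OF assms(1)] by blast
  also have "\<dots> = T" using assms(2) prime_prime_factors by auto
  finally show "prime_factors (\<Prod>T) = T" by simp
  show "squarefree (\<Prod>T)"
    using squarefree_prod_coprime[of T id] assms(2) by (simp add: primes_coprime squarefree_prime)
qed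

lemma squarefree_prod_factors:
  assumes "squarefree (a::nat)"
  shows "\<Prod>(prime_factors a) = a"
proof -
  have a0: "a \<noteq> 0" using assms by (metis not_squarefree_0)
  have m: "\<forall>p\<in>prime_factors a. multiplicity p a = 1"
    using squarefree_factorial_semiring'[OF a0] assms by blast
  have "prime_factorization a = mset_set (prime_factors a)"
  proof (rule multiset_eqI)
    fix p
    show "count (prime_factorization a) p = count (mset_set (prime_factors a)) p"
    proof (cases "p \<in> prime_factors a")
      case True
      have "count (mset_set (prime_factors a)) p = 1" using True by simp
      moreover have "prime p" using True by (rule in_prime_factors_imp_prime)
      then have "count (prime_factorization a) p = 1" using m True by (simp add: count_prime_factorization)
      ultimately show ?thesis by simp
    next
      case False
      then show ?thesis by (simp add: not_in_iff)
    qed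
  qed
  then have "prod_mset (prime_factorization a) = prod_mset (mset_set (prime_factors a))" by simp
  then show ?thesis using a0 by (simp add: prod_unfold_prod_mset)
qed

lemma mobius_sum:
  assumes "0 < n"
  shows "(\<Sum>a | a dvd n. mu a) = (if n = 1 then 1 else 0)"
proof -
  let ?F = "prime_factors n"
  have fin: "finite {a. a dvd n}" using assms by simp
  have "(\<Sum>a | a dvd n. mu a) = (\<Sum>a | a dvd n \<and> squarefree a. mu a)"
    by (rule sum.mono_neutral_right[OF fin]) (auto simp: mu_def)
  also have "\<dots> = (\<Sum>T\<in>Pow ?F. mu (\<Prod>T))"
  proof (rule sum.reindex_bij_betw[symmetric])
    show "bij_betw Prod (Pow ?F) {a. a dvd n \<and> squarefree a}"
    proof (rule bij_betw_byWitness[where f'=prime_factors])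
      show "\<forall>T\<in>Pow ?F. prime_factors (\<Prod>T) = T"
        using prod_primes_factors(1) finite_subset by (metis PowD finite_set_mset in_prime_factors_imp_prime subsetD)
      show "\<forall>a\<in>{a. a dvd n \<and> squarefree a}. \<Prod>(prime_factors a) = a"
        using squarefree_prod_factors by blast
      show "Prod ` Pow ?F \<subseteq> {a. a dvd n \<and> squarefree a}"
      proof safe
        fix T assume T: "T \<subseteq> ?F"
        have fT: "finite T" using T finite_subset by blast
        have pT: "\<And>p. p \<in> T \<Longrightarrow> prime p" using T by auto
        show "squarefree (\<Prod>T)" using prod_primes_factors(2)[OF fT pT] .
        have "prime_factorization (\<Prod>T) \<subseteq># prime_factorization n"
        proof (rule mset_subset_eqI)
          fix p
          have "count (prime_factorization (\<Prod>T)) p \<le> 1"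
          proof -
            have "\<Prod>T \<noteq> 0" using pT fT by (metis prod_zero_iff not_prime_0)
            then show ?thesis using prod_primes_factors(2)[OF fT pT] squarefree_factorial_semiring''
              by (auto simp: count_prime_factorization)
          qed
          moreover have "p \<in> prime_factors (\<Prod>T) \<Longrightarrow> count (prime_factorization n) p \<ge> 1"
          proof -
            assume "p \<in> prime_factors (\<Prod>T)"
            then have "p \<in># prime_factorization n" using prod_primes_factors(1)[OF fT pT] T by auto
            then have "0 < count (prime_factorization n) p" by simp
            then show ?thesis by simp
          qed
          moreover have "p \<notin> prime_factors (\<Prod>T) \<Longrightarrow> count (prime_factorization (\<Prod>T)) p = 0"
            by (simp add: not_in_iff)
          ultimately show "count (prime_factorization (\<Prod>T)) p \<le> count (prime_factorization n) p"
            by (metis le0 le_trans)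
        qed
        then show "\<Prod>T dvd n"
          using prime_factorization_subset_iff_dvd pT fT assms
          by (metis gr_implies_not0 not_prime_0 prod_zero_iff)
      qed
      show "prime_factors ` {a. a dvd n \<and> squarefree a} \<subseteq> Pow ?F"
        using dvd_prime_factors assms by auto
    qed
  qed
  also have "\<dots> = (\<Sum>T\<in>Pow ?F. (-1) ^ card T)"
  proof (rule sum.cong[OF refl])
    fix T assume T: "T \<in> Pow ?F"
    have fT: "finite T" using T finite_subset by auto
    have pT: "\<And>p. p \<in> T \<Longrightarrow> prime p" using T by auto
    have "\<Prod>T \<noteq> 0" using pT fT by (metis prod_zero_iff not_prime_0)
    then show "mu (\<Prod>T) = (-1) ^ card T"
      unfolding mu_def using prod_primes_factors[OF fT pT] by simp
  qed
  also have "\<dots> = (if n = 1 then 1 else 0)"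
  proof (cases "n = 1")
    case True then show ?thesis by simp
  next
    case False
    then have "prime_factorization n \<noteq> {#}" using assms by (simp add: prime_factorization_empty_iff)
    then have "?F \<noteq> {}" by simp
    then show ?thesis using alt_sum_Pow[of ?F] False by simp
  qed
  finally show ?thesis .
qed

definition smv :: "nat \<Rightarrow> nat \<Rightarrow> bool" where
  "smv d v \<longleftrightarrow> 0 < v \<and> (\<forall>q. prime q \<longrightarrow> q dvd v \<longrightarrow> q dvd d)"

lemma mob_coprime:
  assumes "0 < d" "0 < m"
  shows "(\<Sum>a | a dvd d. of_int (mu a) * (if a dvd m then 1 else 0)) = (if coprime d m then 1 else (0::real))"
proof -
  have fin: "finite {a. a dvd d}" using assms by simp
  have "(\<Sum>a | a dvd d. of_int (mu a) * (if a dvd m then 1 else 0)) = (\<Sum>a | a dvd d. if a dvd m then of_int (mu a) else (0::real))"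
    by (rule sum.cong) auto
  also have "\<dots> = (\<Sum>a \<in> {a \<in> {a. a dvd d}. a dvd m}. of_int (mu a))"
    by (rule sum.inter_filter[OF fin, symmetric])
  also have "{a \<in> {a. a dvd d}. a dvd m} = {a. a dvd gcd d m}" by auto
  also have "(\<Sum>a | a dvd gcd d m. (of_int (mu a) :: real)) = of_int (\<Sum>a | a dvd gcd d m. mu a)" by simp
  also have "\<dots> = (if gcd d m = 1 then 1 else 0)"
  proof -
    have gpos: "0 < gcd d m" using assms by simp
    have mz: "(\<Sum>a | a dvd gcd d m. mu a) = (if gcd d m = 1 then 1 else 0)" using mobius_sum[OF gpos] .
    show ?thesis unfolding mz by simp
  qed
  finally show ?thesis by (simp only: coprime_iff_gcd_eq_1)
qed

lemma coprime_smv: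
  assumes "smv d w" "coprime d m"
  shows "coprime w m"
proof (rule ccontr)
  assume "\<not> coprime w m"
  then have "gcd w m \<noteq> 1" using coprime_iff_gcd_eq_1 by blast
  then obtain q where q: "prime q" "q dvd gcd w m" using prime_factor_nat by blast
  then have "q dvd d" "q dvd m" using assms(1) unfolding smv_def by auto
  then have "is_unit q" using assms(2) coprime_common_divisor by blast
  then show False using q(1) by simp
qed

lemma exists_v0:
  assumes "0 < I"
  shows "\<exists>v. smv d v \<and> v dvd I \<and> coprime d (I div v)"
  using assms
proof (induction I rule: less_induct)
  case (less I)
  show ?case
  proof (cases "coprime d I")
    case True
    then show ?thesis by (intro exI[of _ 1]) (auto simp: smv_def)
  next
    case False
    then have "gcd d I \<noteq> 1" using coprime_iff_gcd_eq_1 by blast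
    then obtain q where q: "prime q" "q dvd gcd d I" using prime_factor_nat by blast
    then obtain J where J: "I = q * J" by auto
    have q1: "1 < q" using q(1) prime_gt_1_nat by blast
    have J0: "0 < J" using J less.prems by (cases J) auto
    have JI: "J < I" using J q1 J0 by simp
    obtain v' where v': "smv d v'" "v' dvd J" "coprime d (J div v')" using less.IH[OF JI J0] by blast
    have "smv d (q * v')"
      unfolding smv_def
    proof safe
      show "0 < q * v'" using v'(1) q1 unfolding smv_def by simp
      fix r assume r: "prime r" "r dvd q * v'"
      then have "r dvd q \<or> r dvd v'" using prime_dvd_mult_iff by blast
      then show "r dvd d"
      proof
        assume "r dvd q" then have "r = q" using r(1) q(1) primes_dvd_imp_eq by blast
        then show ?thesis using q(2) by simp
      next
        assume "r dvd v'" then show ?thesis using v'(1) r(1) unfolding smv_def by blast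
      qed
    qed
    moreover have "q * v' dvd I" using J v'(2) by simp
    moreover have "I div (q * v') = J div v'" using J q1 by simp
    ultimately show ?thesis using v'(3) by (intro exI[of _ "q * v'"]) simp
  qed
qed

lemma unique_v0:
  assumes "smv d v" "smv d w" "v dvd I" "w dvd I" "coprime d (I div v)" "coprime d (I div w)"
  shows "v = w"
proof -
  have "w dvd v * (I div v)" using assms(3,4) by simp
  then have wv: "w dvd v" using coprime_smv[OF assms(2,5)] coprime_dvd_mult_left_iff by blast
  have "v dvd w * (I div w)" using assms(3,4) by simp
  then have "v dvd w" using coprime_smv[OF assms(1,6)] coprime_dvd_mult_left_iff by blast
  then show ?thesis using wv dvd_antisym by blast
qed

lemma per_prime:
  assumes d0: "0 < d" and r0: "0 < r" and I0: "0 < I" and X: "r * I \<le> X"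
  shows "(\<Sum>v \<in> {v. smv d v \<and> v \<le> X}. \<Sum>a | a dvd d. of_int (mu a) * (if d * v dvd r * I \<and> a * v dvd I then 1 else 0))
         = (if d dvd r then 1 else (0::real))"
proof -
  obtain v0 where v0: "smv d v0" "v0 dvd I" "coprime d (I div v0)" using exists_v0[OF I0] by blast
  have inner: "(\<Sum>a | a dvd d. of_int (mu a) * (if d * v dvd r * I \<and> a * v dvd I then 1 else 0))
      = (if v = v0 then (if d * v0 dvd r * I then 1 else 0) else (0::real))" if v: "smv d v" for v
  proof (cases "v dvd I")
    case False
    have na: "\<not> a * v dvd I" for a using False dvd_mult_right by blast
    have vv: "v \<noteq> v0" using False v0(2) by blast
    have "(\<Sum>a | a dvd d. of_int (mu a) * (if d * v dvd r * I \<and> a * v dvd I then 1 else 0)) = (0::real)"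
      by (rule sum.neutral) (simp add: na)
    then show ?thesis using vv by simp
  next
    case True
    then obtain k where k: "I = v * k" by auto
    have vpos: "0 < v" using v unfolding smv_def by simp
    have kpos: "0 < k" using k I0 by (cases k) auto
    have ik: "I div v = k" using k vpos by simp
    have eq: "a * v dvd I \<longleftrightarrow> a dvd k" for a
      using k vpos by (metis mult.commute nat_mult_dvd_cancel1)
    have "(\<Sum>a | a dvd d. of_int (mu a) * (if d * v dvd r * I \<and> a * v dvd I then 1 else 0))
        = (if d * v dvd r * I then (\<Sum>a | a dvd d. of_int (mu a) * (if a dvd k then 1 else 0)) else (0::real))"
    proof (cases "d * v dvd r * I")
      case True
      then show ?thesis by (simp add: eq)
    next
      case False
      then show ?thesis by simp
    qed
    also have "\<dots> = (if d * v dvd r * I \<and> coprime d k then 1 else 0)"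
      using mob_coprime[OF d0 kpos] by simp
    also have "\<dots> = (if v = v0 then (if d * v0 dvd r * I then 1 else 0) else (0::real))"
    proof (cases "coprime d k")
      case True
      then have "v = v0" using unique_v0[OF v v0(1) _ v0(2)] \<open>v dvd I\<close> ik v0(3) by simp
      then show ?thesis using True by simp
    next
      case False
      then have "v \<noteq> v0" using v0(3) ik by metis
      then show ?thesis using False by simp
    qed
    finally show ?thesis .
  qed
  have fin: "finite {v. smv d v \<and> v \<le> X}" by (rule finite_subset[of _ "{..X}"]) auto
  have "(\<Sum>v \<in> {v. smv d v \<and> v \<le> X}. \<Sum>a | a dvd d. of_int (mu a) * (if d * v dvd r * I \<and> a * v dvd I then 1 else 0))
     = (\<Sum>v \<in> {v. smv d v \<and> v \<le> X}. if v = v0 then (if d * v0 dvd r * I then 1 else 0) else (0::real))"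
    by (rule sum.cong) (auto simp: inner)
  also have "\<dots> = (if d * v0 dvd r * I then 1 else 0)"
  proof -
    have "v0 \<le> I" using v0(2) I0 dvd_imp_le by blast
    moreover have "I \<le> r * I" using r0 by simp
    ultimately have "v0 \<le> X" using X by linarith
    then have mem: "v0 \<in> {v. smv d v \<and> v \<le> X}" using v0(1) by simp
    show ?thesis using mem by (simp only: sum.delta[OF fin]) simp
  qed
  also have "(d * v0 dvd r * I) \<longleftrightarrow> d dvd r"
  proof -
    obtain m where m: "I = v0 * m" using v0(2) by auto
    have vpos: "0 < v0" using v0(1) unfolding smv_def by simp
    have "I div v0 = m" using m vpos by simp
    then have cm: "coprime d m" using v0(3) by simp
    have e1: "r * I = v0 * (r * m)" using m by simp
    have e2: "d * v0 = v0 * d" by simp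
    have "d * v0 dvd r * I \<longleftrightarrow> v0 * d dvd v0 * (r * m)" unfolding e1 e2 ..
    also have "\<dots> \<longleftrightarrow> d dvd r * m" using vpos nat_mult_dvd_cancel1 by blast
    also have "\<dots> \<longleftrightarrow> d dvd r" using cm coprime_dvd_mult_left_iff by blast
    finally show ?thesis .
  qed
  finally show ?thesis .
qed

lemma card_as_sum:
  assumes "finite P"
  shows "real (card {p \<in> P. Q p}) = (\<Sum>p\<in>P. if Q p then 1 else 0)"
proof -
  have "real (card {p \<in> P. Q p}) = (\<Sum>p\<in>{p \<in> P. Q p}. 1)" by simp
  also have "\<dots> = (\<Sum>p\<in>P. if Q p then 1 else 0)" by (rule sum.inter_filter[OF assms])
  finally show ?thesis .
qed

theorem lemma6p1:
  fixes a1 a2 :: int and d :: nat and x :: real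
  assumes "a1 \<noteq> 0" and "a2 \<noteq> 0"
    and "\<not> (\<exists>n::nat. 0 < n \<and> (lalpha a1 a2 / lbeta a1 a2) ^ n = 1)"
    and "\<not> (\<exists>k::int. disc a1 a2 = k ^ 2)"
    and "0 < d" and "1 < x"
  shows "((\<lambda>v. \<Sum>a | a dvd d. of_int (mu a) * real (piU a1 a2 (d * v) (a * v) x))
           has_sum real (RU a1 a2 d x))
         {v::nat. 0 < v \<and> (\<forall>q. prime q \<longrightarrow> q dvd v \<longrightarrow> q dvd d)}"
proof -
  define D where "D = disc a1 a2"
  define P where "P = {p. prime p \<and> real p \<le> x \<and> \<not> int p dvd a2 * D}"
  define Nn where "Nn p = nat (int p - symb D p)" for p
  define rr where "rr p = rhoU a1 a2 p" for p
  define II where "II p = Nn p div rr p" for p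
  define X where "X = nat \<lfloor>x\<rfloor> + 1"
  define V where "V = {v. smv d v \<and> v \<le> X}"
  have finP: "finite P"
  proof (rule finite_subset[of _ "{..nat \<lfloor>x\<rfloor>}"])
    show "P \<subseteq> {..nat \<lfloor>x\<rfloor>}" unfolding P_def by (auto simp: le_nat_floor)
  qed simp
  have finV: "finite V" unfolding V_def by (rule finite_subset[of _ "{..X}"]) auto
  have pf: "0 < Nn p" "int (Nn p) = int p - symb D p" "Nn p \<le> X" "0 < rr p" "Nn p = rr p * II p" "0 < II p"
    "iotaU a1 a2 p = int (II p)" if pP: "p \<in> P" for p
  proof -
    have pr: "prime p" and nd: "\<not> int p dvd a2 * disc a1 a2" and px: "real p \<le> x"
      using pP unfolding P_def D_def by auto
    note f = prime_facts[OF pr nd]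
    show N0: "0 < Nn p" unfolding Nn_def D_def using f(1) by simp
    show Ni: "int (Nn p) = int p - symb D p" unfolding Nn_def D_def using f(1) by simp
    have "p \<le> nat \<lfloor>x\<rfloor>" using px by (simp add: le_nat_floor)
    then show "Nn p \<le> X" unfolding X_def Nn_def D_def using f(2) by linarith
    show r0: "0 < rr p" unfolding rr_def using f(3) .
    have rd: "rr p dvd Nn p" unfolding rr_def Nn_def D_def using f(4) .
    then show NI: "Nn p = rr p * II p" unfolding II_def by simp
    then show "0 < II p" using N0 by (metis mult_0_right neq0_conv)
    have "iotaU a1 a2 p = int (Nn p) div int (rr p)" unfolding iotaU_def Ni D_def rr_def ..
    also have "\<dots> = int (II p)" unfolding II_def by (simp add: zdiv_int)
    finally show "iotaU a1 a2 p = int (II p)" .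
  qed
  have piU_eq: "piU a1 a2 (d * v) (a * v) x = card {p \<in> P. d * v dvd rr p * II p \<and> a * v dvd II p}" for v a
  proof -
    have "{p. prime p \<and> real p \<le> x \<and> \<not> int p dvd a2 * disc a1 a2
       \<and> [int p = symb (disc a1 a2) p] (mod int (d * v)) \<and> int (a * v) dvd iotaU a1 a2 p}
      = {p \<in> P. d * v dvd rr p * II p \<and> a * v dvd II p}"
    proof -
      have key: "(prime p \<and> real p \<le> x \<and> \<not> int p dvd a2 * disc a1 a2
       \<and> [int p = symb (disc a1 a2) p] (mod int (d * v)) \<and> int (a * v) dvd iotaU a1 a2 p)
        \<longleftrightarrow> (p \<in> P \<and> d * v dvd rr p * II p \<and> a * v dvd II p)" for p
      proof (cases "p \<in> P")
        case False
        then show ?thesis unfolding P_def D_def by auto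
      next
        case True
        have c1: "[int p = symb D p] (mod int (d * v)) \<longleftrightarrow> d * v dvd rr p * II p"
          using pf(2,5)[OF True] by (metis cong_iff_dvd_diff int_dvd_int_iff)
        have c2: "int (a * v) dvd iotaU a1 a2 p \<longleftrightarrow> a * v dvd II p"
          unfolding pf(7)[OF True] by (rule int_dvd_int_iff)
        show ?thesis using True c1 c2 unfolding P_def D_def by auto
      qed
      show ?thesis using key by blast
    qed
    then show ?thesis unfolding piU_def by simp
  qed
  have RU_eq: "RU a1 a2 d x = card {p \<in> P. d dvd rr p}"
    unfolding RU_def P_def D_def rr_def by (rule arg_cong[where f=card]) auto
  let ?f = "\<lambda>v. \<Sum>a | a dvd d. of_int (mu a) * real (piU a1 a2 (d * v) (a * v) x)"
  let ?S = "{v::nat. 0 < v \<and> (\<forall>q. prime q \<longrightarrow> q dvd v \<longrightarrow> q dvd d)}"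
  show ?thesis
  proof (rule has_sum_finite_neutralI[OF finV])
    show "V \<subseteq> ?S" unfolding V_def smv_def by auto
    show "?f v = 0" if v: "v \<in> ?S - V" for v
    proof -
      have vX: "X < v" and vpos: "0 < v" using v unfolding V_def smv_def by auto
      have "piU a1 a2 (d * v) (a * v) x = 0" for a
      proof -
        have nd: "\<not> d * v dvd rr p * II p" if pP: "p \<in> P" for p
        proof
          assume dv: "d * v dvd rr p * II p"
          have "d * v \<le> Nn p" using dv pf(1,5)[OF pP] by (simp add: dvd_imp_le)
          moreover have "v \<le> d * v" using \<open>0 < d\<close> by simp
          ultimately show False using pf(3)[OF pP] vX by linarith
        qed
        have em: "{p \<in> P. d * v dvd rr p * II p \<and> a * v dvd II p} = {}" using nd by blast
        show ?thesis unfolding piU_eq em by (rule card.empty)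
      qed
      then show ?thesis by simp
    qed
    have "(\<Sum>v\<in>V. ?f v) = (\<Sum>v\<in>V. \<Sum>a | a dvd d. \<Sum>p\<in>P. of_int (mu a) * (if d * v dvd rr p * II p \<and> a * v dvd II p then 1 else 0))"
      unfolding piU_eq card_as_sum[OF finP] by (simp add: sum_distrib_left)
    also have "\<dots> = (\<Sum>v\<in>V. \<Sum>p\<in>P. \<Sum>a | a dvd d. of_int (mu a) * (if d * v dvd rr p * II p \<and> a * v dvd II p then 1 else 0))"
      by (rule sum.cong[OF refl]) (rule sum.swap)
    also have "\<dots> = (\<Sum>p\<in>P. \<Sum>v\<in>V. \<Sum>a | a dvd d. of_int (mu a) * (if d * v dvd rr p * II p \<and> a * v dvd II p then 1 else 0))"
      by (rule sum.swap)
    also have "\<dots> = (\<Sum>p\<in>P. if d dvd rr p then 1 else 0)"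
    proof (rule sum.cong[OF refl])
      fix p assume pP: "p \<in> P"
      have le: "rr p * II p \<le> X" using pf(3,5)[OF pP] by simp
      show "(\<Sum>v\<in>V. \<Sum>a | a dvd d. of_int (mu a) * (if d * v dvd rr p * II p \<and> a * v dvd II p then 1 else 0)) = (if d dvd rr p then 1 else (0::real))"
        unfolding V_def by (rule per_prime[OF \<open>0 < d\<close> pf(4)[OF pP] pf(6)[OF pP] le])
    qed
    also have "\<dots> = real (RU a1 a2 d x)" unfolding RU_eq card_as_sum[OF finP] ..
    finally show "real (RU a1 a2 d x) = (\<Sum>v\<in>V. ?f v)" by simp
  qed
qed

end
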